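(* Let $M$ be a Hausdorff space satisfying the first axiom of countability and the Lindelöf condition (every open cover has a countable subcover), and let $\mathcal{B}(M)$ be the $\sigma$-algebra of Borel subsets of $M$. A subset $\mathfrak{p}\subseteq\mathcal{B}(M)$ is a point in $\mathcal{B}(M)$ if and only if there is $x\in M$ with $\mathfrak{p}=\{A\in\mathcal{B}(M): x\in A\}$ (i.e. $\mathfrak{p}$ is an atomic quasipoint of $\mathcal{B}(M)$).
   Context: A point in the $\sigma$-complete lattice $\mathcal{B}(M)$ (lattice operations: union and intersection) is a nonempty subset $\mathfrak{p}$ such that: (1) $\emptyset\notin\mathfrak{p}$; (2) $A,B\in\mathfrak{p}\Rightarrow A\cap B\in\mathfrak{p}$; (3) $A\in\mathfrak{p}$, $A\subseteq B\in\mathcal{B}(M)\Rightarrow B\in\mathfrak{p}$; (4) for every countable family $(A_n)$ in $\mathcal{B}(M)$ with $\bigcup_n A_n\in\mathfrak{p}$ there is $n$ with $A_n\in\mathfrak{p}$. *)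

theory Defs
  imports "HOL-Analysis.Analysis" "HOL-Probability.Probability"
begin

text \<open>Countable families
are indexed by nat (finite nonempty families can be padded by repetition).\<close>
definition sigma_point :: "'a set set \<Rightarrow> 'a set set \<Rightarrow> bool" where
  "sigma_point L p \<longleftrightarrow>
     p \<subseteq> L \<and> p \<noteq> {} \<and> {} \<notin> p \<and>
     (\<forall>A\<in>p. \<forall>B\<in>p. A \<inter> B \<in> p) \<and>
     (\<forall>A\<in>p. \<forall>B\<in>L. A \<subseteq> B \<longrightarrow> B \<in> p) \<and>
     (\<forall>F :: nat \<Rightarrow> 'a set. range F \<subseteq> L \<and> \<Union>(range F) \<in> p \<longrightarrow> (\<exists>n. F n \<in> p))"

end

theory Submission
  imports Defs
begin

theorem proposition3p26:
  fixes p :: "'a :: {t2_space, first_countable_topology} set set"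
  assumes "Lindelof_space (euclidean :: 'a topology)"
  shows "sigma_point (sets (borel :: 'a measure)) p \<longleftrightarrow>
         (\<exists>x. p = {A \<in> sets (borel :: 'a measure). x \<in> A})"
proof
  assume sp: "sigma_point (sets (borel :: 'a measure)) p"
  have sub: "p \<subseteq> sets borel" and ne: "p \<noteq> {}" and emp: "{} \<notin> p"
    and int: "\<And>A B. A \<in> p \<Longrightarrow> B \<in> p \<Longrightarrow> A \<inter> B \<in> p"
    and up: "\<And>A B. A \<in> p \<Longrightarrow> B \<in> sets borel \<Longrightarrow> A \<subseteq> B \<Longrightarrow> B \<in> p"
    and cp: "\<And>F :: nat \<Rightarrow> 'a set. range F \<subseteq> sets borel \<Longrightarrow> \<Union>(range F) \<in> p \<Longrightarrow> \<exists>n. F n \<in> p"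
    using sp unfolding sigma_point_def by blast+
  obtain A0 where A0: "A0 \<in> p" using ne by blast
  have UNIVp: "UNIV \<in> p" using up[OF A0, of UNIV] by simp
  have "\<exists>x. \<forall>U. open U \<and> x \<in> U \<longrightarrow> U \<in> p"
  proof (rule ccontr)
    assume "\<not> ?thesis"
    then have "\<forall>x. \<exists>U. open U \<and> x \<in> U \<and> U \<notin> p" by blast
    then obtain U where U: "\<And>x. open (U x) \<and> x \<in> U x \<and> U x \<notin> p" by metis
    have h1: "\<forall>W\<in>range U. openin euclidean W" using U by simp
    have h2: "\<Union>(range U) = topspace euclidean" using U by auto
    have L: "\<forall>\<U>. (\<forall>W\<in>\<U>. openin euclidean W) \<and> \<Union>\<U> = topspace euclidean
            \<longrightarrow> (\<exists>\<V>. countable \<V> \<and> \<V> \<subseteq> \<U> \<and> \<Union>\<V> = topspace (euclidean :: 'a topology))"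
      using assms unfolding Lindelof_space_def by simp
    have "\<exists>V. countable V \<and> V \<subseteq> range U \<and> \<Union>V = topspace euclidean"
      using L[rule_format, OF conjI[OF h1 h2]] .
    then obtain V where V: "countable V" "V \<subseteq> range U" "\<Union>V = UNIV" by (metis topspace_euclidean)
    then have "V \<noteq> {}" using Union_empty by (metis UNIV_not_empty)
    then have r: "range (from_nat_into V) = V" using V by simp
    have rb: "range (from_nat_into V) \<subseteq> sets borel"
    proof
      fix W assume "W \<in> range (from_nat_into V)"
      then have "W \<in> range U" using r V(2) by (metis subsetD)
      then obtain z where "W = U z" by (metis imageE)
      then have "open W" using U by simp
      then show "W \<in> sets borel" by (rule borel_open)
    qed
    have up': "\<Union>(range (from_nat_into V)) \<in> p" using r V UNIVp by simp
    obtain n where n: "from_nat_into V n \<in> p" using cp[OF rb up'] by (elim exE)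
    have "from_nat_into V n \<in> range U" using r V(2) by (metis rangeI subsetD)
    then obtain z where "from_nat_into V n = U z" by (elim imageE)
    then have "U z \<in> p" using n by simp
    then show False using U[of z] by simp
  qed
  then obtain x where xo: "\<And>U. open U \<Longrightarrow> x \<in> U \<Longrightarrow> U \<in> p" by blast
  obtain B :: "nat \<Rightarrow> 'a set" where B: "\<And>i. x \<in> B i \<and> open (B i)"
    "\<And>S. open S \<Longrightarrow> x \<in> S \<Longrightarrow> \<exists>i. B i \<subseteq> S"
    using first_countable_basis[of x] by metis
  define F where "F = (\<lambda>n. if n = 0 then {x} else - B (n - 1))"
  have Fb: "range F \<subseteq> sets borel"
  proof
    fix W assume "W \<in> range F"
    then obtain n where W: "W = F n" by blast
    show "W \<in> sets borel"
    proof (cases "n = 0")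
      case True then show ?thesis using W F_def by (simp add: borel_closed)
    next
      case False
      have "closed (- B (n - 1))" using B by (intro closed_Compl) simp
      then have "- B (n - 1) \<in> sets borel" by (rule borel_closed)
      then show ?thesis using W F_def False by simp
    qed
  qed
  have "\<Union>(range F) = UNIV"
  proof -
    have "y \<in> \<Union>(range F)" for y
    proof (cases "y = x")
      case True
      have "x \<in> F 0" unfolding F_def by simp
      then show ?thesis using True by blast
    next
      case False
      then have yx: "y \<noteq> x" .
      obtain S where "open S" "x \<in> S" "y \<notin> S"
        using t1_space[OF yx[symmetric]] by blast
      then obtain i where "B i \<subseteq> S" using B by blast
      then have "y \<in> F (Suc i)" using \<open>y \<notin> S\<close> unfolding F_def by auto
      then show "y \<in> \<Union>(range F)" by blast
    qed
    then show ?thesis by auto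
  qed
  then have Up: "\<Union>(range F) \<in> p" using UNIVp by simp
  obtain n where n: "F n \<in> p" using cp[OF Fb Up] by (elim exE)
  have xp: "{x} \<in> p"
  proof (cases "n = 0")
    case True then show ?thesis using n F_def by simp
  next
    case False
    then have "- B (n - 1) \<in> p" using n F_def by simp
    moreover have "B (n - 1) \<in> p" using xo B by blast
    ultimately have "{} \<in> p" using int[of "- B (n - 1)" "B (n - 1)"] by simp
    then show ?thesis using emp by simp
  qed
  show "\<exists>x. p = {A \<in> sets borel. x \<in> A}"
  proof (intro exI[of _ x] set_eqI iffI)
    fix A assume A: "A \<in> p"
    have "x \<in> A"
    proof (rule ccontr)
      assume "x \<notin> A"
      then have "A \<inter> {x} = {}" by auto
      then show False using int[OF A xp] emp by simp
    qed
    then show "A \<in> {A \<in> sets borel. x \<in> A}" using A sub by auto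
  next
    fix A assume "A \<in> {A \<in> sets borel. x \<in> A}"
    then show "A \<in> p" using up[OF xp] by auto
  qed
next
  assume "\<exists>x. p = {A \<in> sets (borel :: 'a measure). x \<in> A}"
  then obtain x where px: "p = {A \<in> sets (borel :: 'a measure). x \<in> A}" by blast
  have c: "\<exists>n. F n \<in> p" if "range F \<subseteq> sets borel" "\<Union>(range F) \<in> p" for F :: "nat \<Rightarrow> 'a set"
  proof -
    from that(2) px have "x \<in> \<Union>(range F)" by simp
    then obtain n where "x \<in> F n" by blast
    then show ?thesis using that(1) px by blast
  qed
  have "p \<subseteq> sets borel \<and> p \<noteq> {} \<and> {} \<notin> p" using px by auto
  moreover have "\<forall>A\<in>p. \<forall>B\<in>p. A \<inter> B \<in> p" using px by auto
  moreover have "\<forall>A\<in>p. \<forall>B\<in>sets borel. A \<subseteq> B \<longrightarrow> B \<in> p" using px by auto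
  moreover have "\<forall>F :: nat \<Rightarrow> 'a set. range F \<subseteq> sets borel \<and> \<Union>(range F) \<in> p \<longrightarrow> (\<exists>n. F n \<in> p)"
    using c by blast
  ultimately show "sigma_point (sets borel) p"
    unfolding sigma_point_def by blast
qed

end
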